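(* Let $\varepsilon>0$ and $q\in(0,1)$, and fix real numbers $\sigma$ and $\tau$. Then there exist constants $C>0$ and $V_0>0$, depending only on $\varepsilon$, $q$, $\sigma$ and $\tau$, such that for every real $v$ with $|v|\ge V_0$ and every complex $t$ with $\Re(t)=\tau$ satisfying $\inf_{r\in\mathbb{Z}_{\ge 0}}|1-q^{t+r}|>\varepsilon$, writing $s=\sigma+iv$, we have $$|\zeta_q(s,t)|\le \begin{cases} C & (\tau>0),\\ C\,|v| & (\tau=0),\\ C\exp\left(-\tau(1+\pi/2)\,|v|\right) & (\tau<0).\end{cases}$$
   Context: For $q\in(0,1)$ and a positive integer $m$, the $q$-integer is $[m]_q=\frac{1-q^m}{1-q}$, and $q^{w}=e^{w\log q}$ for complex $w$. The $q$-analogue of the Riemann zeta function (Kaneko–Kurokawa–Wakayama) is $\zeta_q(s,t)=\sum_{m=1}^\infty \frac{q^{mt}}{[m]_q^s}$, which converges absolutely for $s\in\mathbb{C}$, $\Re(t)>0$, and extends meromorphically to $\mathbb{C}^2$; its poles are simple and lie at $t\in\{a+2\pi i b/\log q : a,b\in\mathbb{Z},\ a\le 0\}$. For $\Re(t)\le 0$, $\zeta_q(s,t)$ denotes this meromorphic continuation (the hypothesis $\inf_{r\ge0}|1-q^{t+r}|>\varepsilon$ excludes the poles). *)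

theory Defs
  imports "HOL-Complex_Analysis.Complex_Analysis"
begin

definition qint :: "real \<Rightarrow> nat \<Rightarrow> real" where
  "qint q m = (1 - q ^ m) / (1 - q)"

definition qpow :: "real \<Rightarrow> complex \<Rightarrow> complex" where
  "qpow q w = exp (w * of_real (ln q))"

text \<open>The defining series sum over m >= 1 of q^(m t) / [m]_q^s,
  with [m]_q^s = exp (s log [m]_q) ([m]_q is a positive real).\<close>
definition zeta_q_series :: "real \<Rightarrow> complex \<Rightarrow> complex \<Rightarrow> complex" where
  "zeta_q_series q s t =
     (\<Sum>n. qpow q (of_nat (Suc n) * t) / exp (s * of_real (ln (qint q (Suc n)))))"

definition qpoles :: "real \<Rightarrow> complex set" where
  "qpoles q = {of_int a + 2 * of_real pi * \<i> * of_int b / of_real (ln q) | a b. a \<le> 0}"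

text \<open>Meromorphic continuation in t (for fixed s): the (unique, by the identity
  theorem) function holomorphic off the pole set that agrees with the series on Re t > 0.\<close>
definition zeta_q :: "real \<Rightarrow> complex \<Rightarrow> complex \<Rightarrow> complex" where
  "zeta_q q s t =
     (SOME f. f holomorphic_on (- qpoles q) \<and>
              (\<forall>u. 0 < Re u \<longrightarrow> f u = zeta_q_series q s u)) t"

end

theory Submission
  imports Defs
begin

definition Eq :: "complex \<Rightarrow> real \<Rightarrow> complex" where
  "Eq s x = exp (- s * of_real (ln (1 - x)))"
definition cq :: "complex \<Rightarrow> nat \<Rightarrow> complex" where
  "cq s k = pochhammer s k / fact k"
definition Rq :: "complex \<Rightarrow> nat \<Rightarrow> real \<Rightarrow> complex" where
  "Rq s K x = Eq s x - (\<Sum>k<K. cq s k * of_real x ^ k)"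
definition Mq :: "real \<Rightarrow> complex \<Rightarrow> nat \<Rightarrow> real" where
  "Mq q s K = cmod (pochhammer s K) * max 1 ((1 - q) powr (- (Re s + real K)))"

lemma powr_bound_aux:
  fixes x q e :: real
  assumes "0 \<le> x" "x \<le> q" "q < 1"
  shows "(1 - x) powr e \<le> max 1 ((1 - q) powr e)"
proof (cases "e \<ge> 0")
  case True
  have "(1 - x) powr e \<le> 1 powr e"
    using powr_mono2[of e "1-x" 1] assms True by auto
  then show ?thesis by simp
next
  case False
  have "(1 - x) powr e \<le> (1 - q) powr e"
    by (rule powr_mono2') (use assms False in auto)
  then show ?thesis by simp
qed

lemma norm_Eq: "x < 1 \<Longrightarrow> cmod (Eq s x) = (1 - x) powr (- Re s)"
  by (simp add: Eq_def powr_def)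

lemma Rq_bound:
  fixes x q :: real
  assumes "0 \<le> x" "x \<le> q" "q < 1"
  shows "cmod (Rq s K x) \<le> Mq q s K * x ^ K"
proof (cases K)
  case 0
  then show ?thesis using powr_bound_aux[OF assms, of "- Re s"] assms
    by (simp add: Rq_def Mq_def norm_Eq)
next
  case (Suc n)
  define f where "f = (\<lambda>i (z::complex). pochhammer s i * exp (-(s + of_nat i) * Ln (1 - z)))"
  define S where "S = closed_segment 0 (complex_of_real q)"
  have S: "z \<in> S \<Longrightarrow> \<exists>y. z = of_real y \<and> 0 \<le> y \<and> y \<le> q" for z
  proof -
    assume "z \<in> S"
    then obtain u where u: "0 \<le> u" "u \<le> 1" "z = of_real (u * q)"
      unfolding S_def closed_segment_def by (auto simp: scaleR_conv_of_real)
    have "0 \<le> q" using assms by simp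
    then have "0 \<le> u * q" "u * q \<le> q" using u by (auto simp: mult_left_le_one_le)
    then show ?thesis using u by blast
  qed
  have deriv: "(f i has_field_derivative f (Suc i) z) (at z within S)" if zS: "z \<in> S" for i z
  proof -
    obtain y where y: "z = of_real y" "0 \<le> y" "y \<le> q" using S[OF zS] by blast
    have nz: "1 - z \<notin> \<real>\<^sub>\<le>\<^sub>0" using y assms
      by (auto simp: complex_nonpos_Reals_iff)
    have nz0: "1 - z \<noteq> 0" using y assms by auto
    have "((\<lambda>z. exp (-(s + of_nat i) * Ln (1 - z))) has_field_derivative
        exp (-(s + of_nat i) * Ln (1 - z)) * (-(s + of_nat i) * (inverse (1 - z) * -1))) (at z)"
      by (auto intro!: derivative_eq_intros nz)
    moreover have "exp (-(s + of_nat i) * Ln (1 - z)) * (-(s + of_nat i) * (inverse (1 - z) * -1))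
        = (s + of_nat i) * exp (-(s + of_nat (Suc i)) * Ln (1 - z))"
    proof -
      have "exp (-(s + of_nat (Suc i)) * Ln (1 - z)) = exp (-(s + of_nat i) * Ln (1 - z)) * exp (- Ln (1 - z))"
        by (simp add: exp_add[symmetric] algebra_simps)
      also have "exp (- Ln (1 - z)) = inverse (1 - z)" using nz0 by (simp add: exp_minus)
      finally show ?thesis by (simp add: algebra_simps)
    qed
    ultimately have "((\<lambda>z. exp (-(s + of_nat i) * Ln (1 - z))) has_field_derivative
        (s + of_nat i) * exp (-(s + of_nat (Suc i)) * Ln (1 - z))) (at z)" by simp
    then have "(f i has_field_derivative pochhammer s i * ((s + of_nat i) * exp (-(s + of_nat (Suc i)) * Ln (1 - z)))) (at z)"
      unfolding f_def by (intro DERIV_cmult) 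
    then show ?thesis unfolding f_def by (auto simp: pochhammer_rec' algebra_simps intro: has_field_derivative_at_within)
  qed
  define B where "B = Mq q s K"
  have Bd: "cmod (f (Suc n) z) \<le> B" if zS: "z \<in> S" for z
  proof -
    obtain y where y: "z = of_real y" "0 \<le> y" "y \<le> q" using S[OF zS] by blast
    have "Ln (1 - z) = of_real (ln (1 - y))" using y assms
      by (simp add: Ln_of_real[symmetric])
    then have "cmod (f (Suc n) z) = cmod (pochhammer s K) * (1 - y) powr (- (Re s + real K))"
      using Suc y assms by (simp add: f_def norm_mult powr_def)
    also have "\<dots> \<le> B" unfolding B_def Mq_def
      by (intro mult_left_mono powr_bound_aux) (use y assms in auto)
    finally show ?thesis .
  qed
  have xS: "complex_of_real x \<in> S"
  proof (cases "q = 0")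
    case True
    then show ?thesis using assms by (simp add: S_def)
  next
    case False
    then have "complex_of_real x = (1 - x / q) *\<^sub>R 0 + (x / q) *\<^sub>R complex_of_real q"
      by (simp add: scaleR_conv_of_real)
    moreover have "0 \<le> x / q" "x / q \<le> 1" using assms False by auto
    ultimately show ?thesis unfolding S_def closed_segment_def by blast
  qed
  have "0 \<in> S" "complex_of_real x \<in> S" using xS by (auto simp: S_def)
  from complex_Taylor[OF convex_closed_segment[of 0 "complex_of_real q", folded S_def] deriv Bd this]
  have T: "cmod (f 0 (of_real x) - (\<Sum>i\<le>n. f i 0 * (of_real x - 0) ^ i / fact i)) \<le> B * cmod (of_real x - 0) ^ Suc n / fact n"
    by blast
  have "f 0 (of_real x) = Eq s x"
    using assms by (simp add: f_def Eq_def Ln_of_real[symmetric])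
  moreover have "(\<Sum>i\<le>n. f i 0 * (of_real x - 0) ^ i / fact i) = (\<Sum>k<K. cq s k * of_real x ^ k)"
    using Suc by (simp add: f_def cq_def lessThan_Suc_atMost)
  ultimately have "cmod (Rq s K x) \<le> B * x ^ K / fact n"
    using T Suc assms by (simp add: Rq_def norm_power)
  also have "\<dots> \<le> B * x ^ K"
  proof -
    have "B \<ge> 0" unfolding B_def Mq_def by simp
    then show ?thesis using assms
      by (simp add: divide_le_eq) (metis fact_ge_1 mult_le_cancel_left1 mult_nonneg_nonneg mult.commute zero_le_power nat_le_linear order.trans fact_gt_zero less_irrefl not_less mult_left_mono of_nat_0_le_iff)
  qed
  finally show ?thesis unfolding B_def .
qed


lemma norm_qpow: "0 < q \<Longrightarrow> cmod (qpow q w) = q powr Re w"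
  by (simp add: qpow_def powr_def)

lemma qpow_Suc_mult: "qpow q (of_nat (Suc n) * t) = qpow q t ^ Suc n"
proof -
  have "qpow q (of_nat (Suc n) * t) = exp (of_nat (Suc n) * (t * of_real (ln q)))"
    by (simp add: qpow_def mult.assoc)
  also have "\<dots> = qpow q t ^ Suc n" by (simp only: exp_of_nat_mult qpow_def)
  finally show ?thesis .
qed

lemma qpow_add_nat: "0 < q \<Longrightarrow> qpow q (t + of_nat k) = qpow q t * of_real q ^ k"
proof -
  assume q: "0 < q"
  have "qpow q (t + of_nat k) = qpow q t * exp (of_nat k * of_real (ln q))"
    by (simp add: qpow_def exp_add[symmetric] algebra_simps)
  also have "exp (of_nat k * of_real (ln q)) = exp (of_real (ln q) :: complex) ^ k" by (simp only: exp_of_nat_mult)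
  also have "exp (of_real (ln q)) = (of_real q :: complex)" using q by (simp add: exp_of_real)
  finally show ?thesis .
qed

lemma powr_nat_mult: "0 < q \<Longrightarrow> q powr (real m * a) = (q powr a) ^ m"
  by (simp add: powr_powr[symmetric] powr_realpow mult.commute)

definition Gq :: "real \<Rightarrow> complex \<Rightarrow> nat \<Rightarrow> complex \<Rightarrow> complex" where
  "Gq q s K t = exp (s * of_real (ln (1 - q))) *
     ((\<Sum>k<K. cq s k * qpow q (t + of_nat k) / (1 - qpow q (t + of_nat k))) +
      (\<Sum>n. qpow q (of_nat (Suc n) * t) * Rq s K (q ^ Suc n)))"

lemma term_bound:
  assumes q: "0 < q" "q < 1"
  shows "cmod (qpow q (of_nat (Suc n) * t) * Rq s K (q ^ Suc n)) \<le> Mq q s K * (q powr (Re t + K)) ^ Suc n"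
proof -
  have "cmod (qpow q (of_nat (Suc n) * t)) = (q powr Re t) ^ Suc n"
    using q by (simp only: qpow_Suc_mult norm_power norm_qpow)
  moreover have "cmod (Rq s K (q ^ Suc n)) \<le> Mq q s K * (q ^ Suc n) ^ K"
  proof (rule Rq_bound)
    show "q ^ Suc n \<le> q" using q by (simp add: power_le_one)
  qed (use q in auto)
  moreover have "(q powr Re t) ^ Suc n * (q ^ Suc n) ^ K = (q powr (Re t + K)) ^ Suc n"
  proof -
    have "(q ^ Suc n) ^ K = (q ^ K) ^ Suc n" unfolding power_mult[symmetric] by (simp only: mult.commute)
    also have "q ^ K = q powr K" using q by (simp add: powr_realpow)
    finally show ?thesis using q by (simp add: powr_add power_mult_distrib)
  qed
  moreover have "0 \<le> Mq q s K" by (simp add: Mq_def)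
  ultimately show ?thesis
  proof -
    assume A: "cmod (qpow q (of_nat (Suc n) * t)) = (q powr Re t) ^ Suc n"
      "cmod (Rq s K (q ^ Suc n)) \<le> Mq q s K * (q ^ Suc n) ^ K"
      "(q powr Re t) ^ Suc n * (q ^ Suc n) ^ K = (q powr (Re t + K)) ^ Suc n"
    have "cmod (qpow q (of_nat (Suc n) * t) * Rq s K (q ^ Suc n)) = (q powr Re t) ^ Suc n * cmod (Rq s K (q ^ Suc n))"
      by (simp only: norm_mult A(1))
    also have "\<dots> \<le> (q powr Re t) ^ Suc n * (Mq q s K * (q ^ Suc n) ^ K)"
      by (rule mult_left_mono[OF A(2)]) simp
    also have "\<dots> = Mq q s K * ((q powr Re t) ^ Suc n * (q ^ Suc n) ^ K)" by (simp only: ac_simps)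
    also have "\<dots> = Mq q s K * (q powr (Re t + K)) ^ Suc n" by (simp only: A(3))
    finally show ?thesis .
  qed
qed

lemma powr_lt1: "0 < (q::real) \<Longrightarrow> q < 1 \<Longrightarrow> 0 < a \<Longrightarrow> q powr a < 1"
  proof -
  assume a: "0 < q" "q < 1" "0 < a"
  have "a * ln q < 0" using a ln_less_zero[of q] by (simp add: mult_pos_neg)
  then show ?thesis using a by (simp add: powr_def)
qed

lemma summable_G:
  assumes q: "0 < q" "q < 1" and t: "Re t + K > 0"
  shows "summable (\<lambda>n. qpow q (of_nat (Suc n) * t) * Rq s K (q ^ Suc n))"
proof (rule summable_comparison_test[OF _ summable_mult[OF summable_ignore_initial_segment[OF summable_geometric, of _ 1]]])
  show "\<exists>N. \<forall>n\<ge>N. norm (qpow q (of_nat (Suc n) * t) * Rq s K (q ^ Suc n)) \<le> Mq q s K * (q powr (Re t + K)) ^ (n + 1)"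
    using term_bound[OF q] by simp
  show "norm (q powr (Re t + K)) < 1" using powr_lt1[OF q t] by simp
qed


lemma G0:
  assumes q: "0 < q" "q < 1" and t: "0 < Re t"
  shows "Gq q s 0 t = zeta_q_series q s t"
proof -
  define A where "A = exp (s * of_real (ln (1 - q)))"
  have trm: "qpow q (of_nat (Suc n) * t) / exp (s * of_real (ln (qint q (Suc n))))
     = A * (qpow q (of_nat (Suc n) * t) * Rq s 0 (q ^ Suc n))" for n
  proof -
    have qn1: "q ^ Suc n < 1" using power_Suc_less_one[OF q] .
    have qn: "0 < 1 - q ^ Suc n" "q ^ Suc n < 1" using qn1 by auto
    have L: "ln (qint q (Suc n)) = ln (1 - q ^ Suc n) - ln (1 - q)"
      unfolding qint_def using q qn by (simp add: ln_div)
    have E: "s * of_real (ln (1 - q)) + - s * of_real (ln (1 - q ^ Suc n)) + s * of_real (ln (qint q (Suc n))) = 0"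
      unfolding L by (simp add: algebra_simps)
    have "A * exp (- s * of_real (ln (1 - q ^ Suc n))) * exp (s * of_real (ln (qint q (Suc n)))) = 1"
      unfolding A_def exp_add[symmetric] E by simp
    then show ?thesis
      by (simp add: Rq_def Eq_def field_simps)
  qed
  have "zeta_q_series q s t = (\<Sum>n. A * (qpow q (of_nat (Suc n) * t) * Rq s 0 (q ^ Suc n)))"
    unfolding zeta_q_series_def trm ..
  also have "\<dots> = A * (\<Sum>n. qpow q (of_nat (Suc n) * t) * Rq s 0 (q ^ Suc n))"
    by (rule suminf_mult[OF summable_G[OF q]]) (use t in simp)
  finally show ?thesis by (simp add: Gq_def A_def)
qed

lemma G_step:
  assumes q: "0 < q" "q < 1" and t: "Re t + K > 0"
  shows "Gq q s (Suc K) t = Gq q s K t"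
proof -
  define w where "w = qpow q (t + of_nat K)"
  have w1: "norm w < 1" unfolding w_def using q powr_lt1[OF q t] by (simp add: norm_qpow)
  have wn: "qpow q (of_nat (Suc n) * t) * of_real (q ^ Suc n) ^ K = w ^ Suc n" for n
    unfolding w_def qpow_add_nat[OF q(1)] qpow_Suc_mult
    by (simp add: power_mult_distrib flip: power_mult) (simp add: power_mult[symmetric] mult.commute)
  have geo: "(\<lambda>n. w ^ Suc n) sums (w / (1 - w))"
    using sums_mult[OF geometric_sums[OF w1], of w] by (simp add: field_simps)
  have RS: "Rq s (Suc K) x = Rq s K x - cq s K * of_real x ^ K" for x
    by (simp add: Rq_def)
  have s1: "(\<lambda>n. qpow q (of_nat (Suc n) * t) * Rq s K (q ^ Suc n)) sums
        (\<Sum>n. qpow q (of_nat (Suc n) * t) * Rq s K (q ^ Suc n))"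
    by (rule summable_sums[OF summable_G[OF q t]])
  have "(\<lambda>n. qpow q (of_nat (Suc n) * t) * Rq s (Suc K) (q ^ Suc n)) sums
        ((\<Sum>n. qpow q (of_nat (Suc n) * t) * Rq s K (q ^ Suc n)) - cq s K * (w / (1 - w)))"
  proof -
    have "(\<lambda>n. qpow q (of_nat (Suc n) * t) * Rq s K (q ^ Suc n) - cq s K * w ^ Suc n) sums
        ((\<Sum>n. qpow q (of_nat (Suc n) * t) * Rq s K (q ^ Suc n)) - cq s K * (w / (1 - w)))"
      by (rule sums_diff[OF s1 sums_mult[OF geo]])
    moreover have "qpow q (of_nat (Suc n) * t) * Rq s (Suc K) (q ^ Suc n) =
        qpow q (of_nat (Suc n) * t) * Rq s K (q ^ Suc n) - cq s K * w ^ Suc n" for n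
      unfolding RS wn[symmetric] by (simp add: algebra_simps)
    ultimately show ?thesis by simp
  qed
  then have "(\<Sum>n. qpow q (of_nat (Suc n) * t) * Rq s (Suc K) (q ^ Suc n)) =
      (\<Sum>n. qpow q (of_nat (Suc n) * t) * Rq s K (q ^ Suc n)) - cq s K * (w / (1 - w))"
    by (rule sums_unique[symmetric])
  then have X: "(\<Sum>k<Suc K. cq s k * qpow q (t + of_nat k) / (1 - qpow q (t + of_nat k))) +
      (\<Sum>n. qpow q (of_nat (Suc n) * t) * Rq s (Suc K) (q ^ Suc n)) =
      (\<Sum>k<K. cq s k * qpow q (t + of_nat k) / (1 - qpow q (t + of_nat k))) +
      (\<Sum>n. qpow q (of_nat (Suc n) * t) * Rq s K (q ^ Suc n))"
    by (simp add: w_def)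
  show ?thesis unfolding Gq_def X by (rule refl)
qed

lemma G_eq_add:
  assumes q: "0 < q" "q < 1" and t: "Re t + K > 0"
  shows "Gq q s (K + j) t = Gq q s K t"
proof (induction j)
  case (Suc j)
  have "Re t + real (K + j) > 0" using t by simp
  then show ?case using G_step[OF q, of t "K + j" s] Suc by simp
qed simp

lemma G_eq:
  assumes q: "0 < q" "q < 1" and t: "Re t + K > 0" "Re t + K' > 0"
  shows "Gq q s K t = Gq q s K' t"
proof (cases "K \<le> K'")
  case True
  then show ?thesis using G_eq_add[OF q t(1), of s "K' - K"] by simp
next
  case False
  then show ?thesis using G_eq_add[OF q t(2), of s "K - K'"] by simp
qed


lemma qpoles_char:
  assumes q: "0 < q" "q < 1"
  shows "qpoles q = (Re -` (\<int> \<inter> {..0})) \<inter> ((\<lambda>z. Im z * ln q / (2 * pi)) -` \<int>)"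
proof -
  have L: "ln q \<noteq> 0" using q by simp
  show ?thesis
  proof (intro equalityI subsetI)
    fix z assume "z \<in> qpoles q"
    then obtain a b where z: "z = of_int a + 2 * of_real pi * \<i> * of_int b / of_real (ln q)" "a \<le> 0"
      unfolding qpoles_def by blast
    have "Re z = a" "Im z = 2 * pi * b / ln q" unfolding z(1) using L
      by (simp_all add: Re_divide Im_divide power2_eq_square)
    then show "z \<in> (Re -` (\<int> \<inter> {..0})) \<inter> ((\<lambda>z. Im z * ln q / (2 * pi)) -` \<int>)"
      using z(2) L by auto
  next
    fix z assume "z \<in> (Re -` (\<int> \<inter> {..0})) \<inter> ((\<lambda>z. Im z * ln q / (2 * pi)) -` \<int>)"
    then obtain a b where ab: "Re z = of_int a" "Im z * ln q / (2 * pi) = of_int b" "a \<le> 0"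
      by (auto elim!: Ints_cases)
    have "Im z = 2 * pi * b / ln q" using ab(2) L by (simp add: field_simps)
    then have "z = of_int a + 2 * of_real pi * \<i> * of_int b / of_real (ln q)"
      using ab(1) L by (intro complex_eqI) (simp_all add: Re_divide Im_divide power2_eq_square)
    then show "z \<in> qpoles q" unfolding qpoles_def using ab(3) by blast
  qed
qed

lemma qpoles_closed:
  assumes q: "0 < q" "q < 1"
  shows "closed (qpoles q)"
  unfolding qpoles_char[OF q]
  by (intro closed_Int continuous_closed_vimage closed_Ints closed_atMost continuous_intros)
     (auto intro: continuous_at_imp_continuous_within simp: bounded_linear.isCont[OF bounded_linear_Re] bounded_linear.isCont[OF bounded_linear_Im])

lemma qpoles_countable: "countable (qpoles q)"
proof -
  have "qpoles q \<subseteq> (\<lambda>(a,b). of_int a + 2 * of_real pi * \<i> * of_int b / of_real (ln q)) ` (UNIV :: (int \<times> int) set)"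
    unfolding qpoles_def by auto
  then show ?thesis by (rule countable_subset) simp
qed

lemma qpoles_Re: "z \<in> qpoles q \<Longrightarrow> Re z \<le> 0"
  unfolding qpoles_def by (auto simp: Re_divide)

lemma qpow_ne1:
  assumes q: "0 < q" "q < 1" and t: "t \<notin> qpoles q"
  shows "qpow q (t + of_nat k) \<noteq> 1"
proof
  assume "qpow q (t + of_nat k) = 1"
  then obtain n :: int where n: "Re ((t + of_nat k) * of_real (ln q)) = 0"
     "Im ((t + of_nat k) * of_real (ln q)) = of_int (2 * n) * pi"
    unfolding qpow_def exp_eq_1 by blast
  have L: "ln q \<noteq> 0" using q by simp
  have "Re t = - real k" using n(1) L by simp
  moreover have "Im t = 2 * pi * n / ln q" using n(2) L by (simp add: field_simps)
  ultimately have "t = of_int (- int k) + 2 * of_real pi * \<i> * of_int n / of_real (ln q)"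
    using L by (intro complex_eqI) (simp_all add: Re_divide Im_divide power2_eq_square)
  then have "t \<in> qpoles q" unfolding qpoles_def by (intro CollectI exI[of _ "- int k"] exI[of _ n]) simp
  then show False using t by simp
qed

lemma qpoles_conn: "connected (- qpoles q)"
proof -
  have "connected (UNIV - qpoles q)"
    by (rule connected_open_diff_countable) (auto simp: qpoles_countable)
  then show ?thesis by (simp add: Compl_eq_Diff_UNIV)
qed


lemma powr_less_neg_base:
  fixes q :: real
  assumes q: "0 < q" "q < 1" and ab: "b < a"
  shows "q powr a < q powr b"
proof -
  have "a * ln q < b * ln q" using ab ln_less_zero[OF q] by (simp add: mult_strict_right_mono_neg)
  then show ?thesis using q by (simp add: powr_def)
qed

lemma qpow_holo: "qpow q holomorphic_on S"
  unfolding qpow_def by (intro holomorphic_intros)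

lemma G_holo:
  assumes q: "0 < q" "q < 1"
  shows "Gq q s K holomorphic_on ({t. - real K < Re t} - qpoles q)"
proof -
  define U where "U = {t. - real K < Re t}"
  define a where "a = (\<lambda>n. Rq s K (q ^ Suc n))"
  define R where "R = q powr (- real K)"
  define P where "P = (\<lambda>w. \<Sum>n. a n * w ^ n)"
  have aB: "cmod (a n) \<le> Mq q s K * q ^ K * (q ^ K) ^ n" for n
  proof -
    have "cmod (a n) \<le> Mq q s K * (q ^ Suc n) ^ K" unfolding a_def
      by (rule Rq_bound) (use q in \<open>auto simp: power_le_one\<close>)
    also have "(q ^ Suc n) ^ K = q ^ K * (q ^ K) ^ n"
    proof -
      have "(q ^ Suc n) ^ K = q ^ (Suc n * K)" by (simp only: power_mult)
      also have "Suc n * K = K + K * n" by simp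
      finally show ?thesis by (simp only: power_add power_mult)
    qed
    finally show ?thesis by (simp add: mult.assoc)
  qed
  have qKR: "q ^ K * R = 1" unfolding R_def using q by (simp add: powr_realpow[symmetric] powr_add[symmetric])
  have summ: "summable (\<lambda>n. a n * z ^ n)" if z: "norm z < R" for z :: complex
  proof (rule summable_comparison_test[OF _ summable_mult[OF summable_geometric]])
    show "\<exists>N. \<forall>n\<ge>N. norm (a n * z ^ n) \<le> Mq q s K * q ^ K * (q ^ K * norm z) ^ n"
    proof (intro exI allI impI)
      fix n
      have "norm (a n * z ^ n) = cmod (a n) * norm z ^ n" by (simp add: norm_mult norm_power)
      also have "\<dots> \<le> Mq q s K * q ^ K * (q ^ K) ^ n * norm z ^ n"
        by (rule mult_right_mono[OF aB]) simp
      finally show "norm (a n * z ^ n) \<le> Mq q s K * q ^ K * (q ^ K * norm z) ^ n"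
        by (simp add: power_mult_distrib mult.assoc)
    qed
    have "q ^ K * norm z < q ^ K * R" using z q by simp
    then show "norm (q ^ K * norm z) < 1" using qKR q by simp
  qed
  have Ph: "P holomorphic_on ball 0 R"
    unfolding holomorphic_on_open[OF open_ball] P_def
    using termdiffs_strong'[of R a, OF summ] by (auto simp: dist_norm) blast
  have img: "qpow q ` U \<subseteq> ball 0 R"
  proof
    fix w assume "w \<in> qpow q ` U"
    then obtain t where t: "t \<in> U" "w = qpow q t" by blast
    have "q powr Re t < q powr (- real K)" using t(1) unfolding U_def
      by (intro powr_less_neg_base q) auto
    then show "w \<in> ball 0 R" using t q by (simp add: R_def norm_qpow)
  qed
  have H1: "(\<lambda>t. qpow q t * P (qpow q t)) holomorphic_on U"
    using holomorphic_on_compose_gen[OF qpow_holo Ph img] qpow_holo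
    by (auto intro!: holomorphic_intros simp: o_def)
  have eqS: "(\<Sum>n. qpow q (of_nat (Suc n) * t) * Rq s K (q ^ Suc n)) = qpow q t * P (qpow q t)"
    if "t \<in> U" for t
  proof -
    have "Re t + K > 0" using that by (simp add: U_def)
    have "norm (qpow q t) < R" using img that by auto
    have "(\<Sum>n. qpow q (of_nat (Suc n) * t) * Rq s K (q ^ Suc n)) = (\<Sum>n. qpow q t * (a n * qpow q t ^ n))"
      unfolding qpow_Suc_mult a_def by (simp only: power_Suc ac_simps)
    also have "\<dots> = qpow q t * P (qpow q t)" unfolding P_def
      by (rule suminf_mult[OF summ]) fact
    finally show ?thesis .
  qed
  have H2: "(\<lambda>t. exp (s * of_real (ln (1 - q))) *
     ((\<Sum>k<K. cq s k * qpow q (t + of_nat k) / (1 - qpow q (t + of_nat k))) +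
      qpow q t * P (qpow q t))) holomorphic_on (U - qpoles q)"
  proof -
    have H1': "(\<lambda>t. qpow q t * P (qpow q t)) holomorphic_on (U - qpoles q)"
      by (rule holomorphic_on_subset[OF H1]) auto
    have FS: "(\<lambda>t. \<Sum>k<K. cq s k * qpow q (t + of_nat k) / (1 - qpow q (t + of_nat k))) holomorphic_on (U - qpoles q)"
    proof (intro holomorphic_intros)
      fix k t assume "t \<in> U - qpoles q"
      then show "1 - qpow q (t + of_nat k) \<noteq> 0" using qpow_ne1[OF q, of t k] by auto
    qed (auto simp: qpow_def intro!: holomorphic_intros)
    show ?thesis by (intro holomorphic_on_mult holomorphic_on_const holomorphic_on_add FS H1')
  qed
  show ?thesis unfolding U_def[symmetric]
  proof (rule holomorphic_transform[OF H2])
    fix t assume tU: "t \<in> U - qpoles q"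
    show "exp (s * of_real (ln (1 - q))) *
     ((\<Sum>k<K. cq s k * qpow q (t + of_nat k) / (1 - qpow q (t + of_nat k))) +
      qpow q t * P (qpow q t)) = Gq q s K t" unfolding Gq_def eqS[of t, OF DiffD1[OF tU]] ..
  qed
qed


definition Kof :: "complex \<Rightarrow> nat" where "Kof t = nat (floor (- Re t)) + 1"

lemma Kof_pos: "Re t + real (Kof t) > 0"
proof -
  have "real (nat (floor (- Re t))) \<ge> of_int (floor (- Re t))" by simp
  moreover have "of_int (floor (- Re t)) > - Re t - 1" by linarith
  ultimately show ?thesis unfolding Kof_def by linarith
qed

definition Fq :: "real \<Rightarrow> complex \<Rightarrow> complex \<Rightarrow> complex" where
  "Fq q s t = Gq q s (Kof t) t"

lemma F_holo:
  assumes q: "0 < q" "q < 1"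
  shows "Fq q s holomorphic_on (- qpoles q)"
proof -
  have op: "open (- qpoles q)" using qpoles_closed[OF q] by (simp add: open_Compl)
  show ?thesis unfolding holomorphic_on_open[OF op]
  proof
    fix x assume x: "x \<in> - qpoles q"
    define S where "S = {t. - real (Kof x) < Re t} - qpoles q"
    have opS: "open S" unfolding S_def
      by (intro open_Diff qpoles_closed q open_halfspace_Re_gt)
    have xS: "x \<in> S" using x Kof_pos[of x] by (auto simp: S_def)
    have "Gq q s (Kof x) holomorphic_on S" unfolding S_def by (rule G_holo[OF q])
    then obtain f' where "DERIV (Gq q s (Kof x)) x :> f'"
      using holomorphic_on_open[OF opS] xS by blast
    moreover have "Gq q s (Kof x) y = Fq q s y" if "y \<in> S" for y
      unfolding Fq_def by (rule G_eq[OF q]) (use that Kof_pos[of y] in \<open>auto simp: S_def\<close>)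
    ultimately have "DERIV (Fq q s) x :> f'"
      by (rule has_field_derivative_transform_within_open[OF _ opS xS])
    then show "\<exists>f'. DERIV (Fq q s) x :> f'" by blast
  qed
qed

lemma F_series:
  assumes q: "0 < q" "q < 1" and u: "0 < Re u"
  shows "Fq q s u = zeta_q_series q s u"
proof -
  have "Fq q s u = Gq q s 0 u" unfolding Fq_def
    by (rule G_eq[OF q]) (use u Kof_pos[of u] in auto)
  also have "\<dots> = zeta_q_series q s u" by (rule G0[OF q u])
  finally show ?thesis .
qed

lemma zeta_eq:
  assumes q: "0 < q" "q < 1" and t: "t \<notin> qpoles q"
  shows "zeta_q q s t = Fq q s t"
proof -
  define Pr where "Pr = (\<lambda>f. f holomorphic_on (- qpoles q) \<and>
              (\<forall>u. 0 < Re u \<longrightarrow> f u = zeta_q_series q s u))"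
  have "Pr (Fq q s)" unfolding Pr_def using F_holo[OF q] F_series[OF q] by blast
  then have P: "Pr (SOME f. Pr f)" by (rule someI[of Pr])
  have z: "zeta_q q s t = (SOME f. Pr f) t" unfolding zeta_q_def Pr_def ..
  have op: "open (- qpoles q)" using qpoles_closed[OF q] by (simp add: open_Compl)
  have tC: "t \<in> - qpoles q" using t by simp
  have h1: "{u. 0 < Re u} \<noteq> {}" by (auto intro: exI[of _ 1])
  have h2: "{u. 0 < Re u} \<subseteq> - qpoles q" using qpoles_Re by fastforce
  have h3: "(SOME f. Pr f) holomorphic_on - qpoles q" using P by (simp add: Pr_def)
  have h4: "\<And>z. z \<in> {u. 0 < Re u} \<Longrightarrow> (SOME f. Pr f) z = Fq q s z"
    using P F_series[OF q] by (auto simp: Pr_def)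
  have "(SOME f. Pr f) t = Fq q s t"
    using [[show_types]] apply (rule analytic_continuation_open[OF open_halfspace_Re_gt op h1 qpoles_conn h2 h3 F_holo[OF q] h4])
    apply simp
    apply (rule tC)
    done
  then show ?thesis using z by simp
qed


lemma G_bound:
  assumes q: "0 < q" "q < 1" and t: "Re t + K > 0" and e: "\<epsilon> > 0"
    and sep: "\<And>k. cmod (1 - qpow q (t + of_nat k)) > \<epsilon>"
  shows "cmod (Gq q s K t) \<le> (1 - q) powr Re s *
     ((\<Sum>k<K. cmod (cq s k) * q powr (Re t + k) / \<epsilon>) +
      Mq q s K * (q powr (Re t + K) / (1 - q powr (Re t + K))))"
proof -
  define z where "z = q powr (Re t + K)"
  have z1: "z < 1" "0 \<le> z" unfolding z_def using powr_lt1[OF q t] by auto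
  have nA: "cmod (exp (s * of_real (ln (1 - q)))) = (1 - q) powr Re s"
    using q by (simp add: powr_def)
  have S1: "cmod (\<Sum>k<K. cq s k * qpow q (t + of_nat k) / (1 - qpow q (t + of_nat k)))
      \<le> (\<Sum>k<K. cmod (cq s k) * q powr (Re t + k) / \<epsilon>)"
  proof (rule order.trans[OF norm_sum sum_mono])
    fix k
    have d: "cmod (1 - qpow q (t + of_nat k)) > \<epsilon>" by (rule sep)
    have "cmod (cq s k * qpow q (t + of_nat k) / (1 - qpow q (t + of_nat k)))
        = cmod (cq s k) * q powr (Re t + k) / cmod (1 - qpow q (t + of_nat k))"
      using q by (simp add: norm_mult norm_divide norm_qpow)
    also have "\<dots> \<le> cmod (cq s k) * q powr (Re t + k) / \<epsilon>"
      using d e by (intro divide_left_mono) (auto intro!: mult_pos_pos)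
    finally show "cmod (cq s k * qpow q (t + of_nat k) / (1 - qpow q (t + of_nat k)))
        \<le> cmod (cq s k) * q powr (Re t + k) / \<epsilon>" .
  qed
  have geo: "(\<lambda>n. Mq q s K * z ^ Suc n) sums (Mq q s K * (z / (1 - z)))"
  proof -
    have "(\<lambda>n. z ^ n) sums (1 / (1 - z))" by (rule geometric_sums) (use z1 in auto)
    from sums_mult[OF this, of "Mq q s K * z"] show ?thesis by (simp add: field_simps)
  qed
  have S2: "cmod (\<Sum>n. qpow q (of_nat (Suc n) * t) * Rq s K (q ^ Suc n)) \<le> Mq q s K * (z / (1 - z))"
  proof -
    have "cmod (\<Sum>n. qpow q (of_nat (Suc n) * t) * Rq s K (q ^ Suc n)) \<le> (\<Sum>n. Mq q s K * z ^ Suc n)"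
      by (rule norm_suminf_le) (use term_bound[OF q] sums_summable[OF geo] in \<open>auto simp: z_def\<close>)
    also have "\<dots> = Mq q s K * (z / (1 - z))" by (rule sums_unique[symmetric, OF geo])
    finally show ?thesis .
  qed
  have "cmod (Gq q s K t) \<le> (1 - q) powr Re s *
     (cmod (\<Sum>k<K. cq s k * qpow q (t + of_nat k) / (1 - qpow q (t + of_nat k))) +
      cmod (\<Sum>n. qpow q (of_nat (Suc n) * t) * Rq s K (q ^ Suc n)))"
    unfolding Gq_def norm_mult nA by (intro mult_left_mono norm_triangle_ineq) auto
  also have "\<dots> \<le> (1 - q) powr Re s *
     ((\<Sum>k<K. cmod (cq s k) * q powr (Re t + k) / \<epsilon>) + Mq q s K * (z / (1 - z)))"
    by (intro mult_left_mono add_mono S1 S2) auto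
  finally show ?thesis unfolding z_def .
qed

lemma poch_bound: "cmod (pochhammer s k) \<le> (cmod s + real k) ^ k"
proof (induction k)
  case (Suc k)
  have "cmod (pochhammer s (Suc k)) = cmod (pochhammer s k) * cmod (s + of_nat k)"
    by (simp add: pochhammer_rec' norm_mult mult.commute)
  also have "\<dots> \<le> (cmod s + real k) ^ k * (cmod s + real (Suc k))"
  proof (rule mult_mono[OF Suc])
    show "cmod (s + of_nat k) \<le> cmod s + real (Suc k)"
      using norm_triangle_ineq[of s "of_nat k"] by simp
  qed auto
  also have "\<dots> \<le> (cmod s + real (Suc k)) ^ k * (cmod s + real (Suc k))"
    by (intro mult_right_mono power_mono) auto
  finally show ?case by (simp add: mult.commute)
qed simp


definition Dq :: "real \<Rightarrow> real \<Rightarrow> real \<Rightarrow> real \<Rightarrow> nat \<Rightarrow> real" where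
  "Dq q \<epsilon> \<sigma> \<tau> K = (1 - q) powr \<sigma> *
     ((\<Sum>(k::nat)<K. q powr (\<tau> + real k) / \<epsilon>) +
      max 1 ((1 - q) powr (- (\<sigma> + real K))) * (q powr (\<tau> + K) / (1 - q powr (\<tau> + K))))"

lemma divide_le_eq_1_pos_imp: "0 \<le> (a::real) \<Longrightarrow> 1 \<le> b \<Longrightarrow> a / b \<le> a"
  by (simp add: divide_le_eq mult_le_cancel_left1 order_trans[OF _ mult_left_mono[of 1 b a]])

lemma G_poly:
  assumes q: "0 < q" "q < 1" and t: "Re t + K > 0" and e: "\<epsilon> > 0"
    and sep: "\<And>k. cmod (1 - qpow q (t + of_nat k)) > \<epsilon>"
  shows "cmod (Gq q s K t) \<le> Dq q \<epsilon> (Re s) (Re t) K * (cmod s + K + 1) ^ K"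
proof -
  define X where "X = cmod s + K + 1"
  have X1: "1 \<le> X" unfolding X_def by simp
  have z1: "q powr (Re t + K) < 1" using powr_lt1[OF q t] by simp
  have cqb: "cmod (cq s k) \<le> X ^ K" if "k < K" for k
  proof -
    have "cmod (cq s k) = cmod (pochhammer s k) / fact k"
      by (simp add: cq_def norm_divide)
    also have "\<dots> \<le> cmod (pochhammer s k)"
      by (rule divide_le_eq_1_pos_imp) auto
    also have "\<dots> \<le> (cmod s + real k) ^ k" by (rule poch_bound)
    also have "\<dots> \<le> X ^ k" unfolding X_def using that by (intro power_mono) auto
    also have "\<dots> \<le> X ^ K" using that X1 by (intro power_increasing) auto
    finally show ?thesis .
  qed
  have Mb: "Mq q s K \<le> X ^ K * max 1 ((1 - q) powr (- (Re s + real K)))"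
    unfolding Mq_def
  proof (rule mult_right_mono)
    show "cmod (pochhammer s K) \<le> X ^ K"
      using poch_bound[of s K] X1 unfolding X_def
      by (meson add_increasing2 le_add_same_cancel1 norm_ge_zero of_nat_0_le_iff order.trans power_mono zero_le_one)
  qed auto
  have "cmod (Gq q s K t) \<le> (1 - q) powr Re s *
     ((\<Sum>k<K. cmod (cq s k) * q powr (Re t + k) / \<epsilon>) +
      Mq q s K * (q powr (Re t + K) / (1 - q powr (Re t + K))))"
    by (rule G_bound[OF q t e sep])
  also have "\<dots> \<le> (1 - q) powr Re s *
     ((\<Sum>k<K. X ^ K * (q powr (Re t + k) / \<epsilon>)) +
      (X ^ K * max 1 ((1 - q) powr (- (Re s + real K)))) * (q powr (Re t + K) / (1 - q powr (Re t + K))))"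
  proof (intro mult_left_mono add_mono sum_mono mult_right_mono Mb)
    fix k assume "k \<in> {..<K}"
    then have "cmod (cq s k) \<le> X ^ K" using cqb by auto
    then show "cmod (cq s k) * q powr (Re t + real k) / \<epsilon> \<le> X ^ K * (q powr (Re t + real k) / \<epsilon>)"
      using e by (simp add: divide_right_mono mult_right_mono)
  qed (use z1 in auto)
  also have "\<dots> = Dq q \<epsilon> (Re s) (Re t) K * X ^ K"
    unfolding Dq_def sum_distrib_left[symmetric] by (simp only: ac_simps distrib_left)
  finally show ?thesis unfolding X_def .
qed

lemma Dq_nonneg:
  assumes q: "0 < q" "q < 1" and t: "\<tau> + K > 0" and e: "\<epsilon> > 0"
  shows "0 \<le> Dq q \<epsilon> \<sigma> \<tau> K"
proof -
  have "q powr (\<tau> + K) < 1" using powr_lt1[OF q t] by simp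
  then show ?thesis unfolding Dq_def using e
    by (intro mult_nonneg_nonneg add_nonneg_nonneg sum_nonneg) auto
qed

lemma pole_imp_qpow1:
  assumes q: "0 < q" "q < 1" and t: "t \<in> qpoles q"
  shows "\<exists>k. qpow q (t + of_nat k) = 1"
proof -
  obtain a b where ab: "t = of_int a + 2 * of_real pi * \<i> * of_int b / of_real (ln q)" "a \<le> 0"
    using t unfolding qpoles_def by blast
  have L: "ln q \<noteq> 0" using q by simp
  have "t + of_nat (nat (- a)) = 2 * of_real pi * \<i> * of_int b / of_real (ln q)"
    using ab by simp
  then have "(t + of_nat (nat (- a))) * of_real (ln q) = 2 * of_real pi * \<i> * of_int b"
    using L by simp
  then have "qpow q (t + of_nat (nat (- a))) = 1"
    unfolding qpow_def exp_eq_1 by (auto intro!: exI[of _ b])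
  then show ?thesis by blast
qed


lemma exp_poly_bound:
  fixes b x :: real and K :: nat
  assumes b: "b > 0" and x: "x \<ge> 0" and K: "K > 0"
  shows "x ^ K \<le> (real K / b) ^ K * exp (b * x)"
proof -
  have "b * x / real K \<le> 1 + b * x / real K" by simp
  then have "(b * x / real K) ^ K \<le> (1 + b * x / real K) ^ K"
    using b x by (intro power_mono) auto
  also have "\<dots> \<le> exp (b * x)"
  proof (rule exp_ge_one_plus_x_over_n_power_n)
    have "0 \<le> b * x" using b x by simp
    then show "- real K \<le> b * x" by linarith
  qed (use K in auto)
  finally have "(b / real K) ^ K * x ^ K \<le> exp (b * x)"
    by (simp add: power_mult_distrib power_divide)
  then have "x ^ K \<le> exp (b * x) / (b / real K) ^ K"
    using b K by (simp add: field_simps)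
  then show ?thesis using b K by (simp add: power_divide field_simps)
qed

theorem theorem1p1:
  fixes \<epsilon> q \<sigma> \<tau> :: real
  assumes "\<epsilon> > 0" and "0 < q" and "q < 1"
  shows "\<exists>C>0. \<exists>V0>0. \<forall>v t. \<bar>v\<bar> \<ge> V0 \<longrightarrow> Re t = \<tau> \<longrightarrow>
           (INF r\<in>(UNIV::nat set). cmod (1 - qpow q (t + of_nat r))) > \<epsilon> \<longrightarrow>
           cmod (zeta_q q (Complex \<sigma> v) t) \<le>
             (if \<tau> > 0 then C
              else if \<tau> = 0 then C * \<bar>v\<bar>
              else C * exp (- \<tau> * (1 + pi / 2) * \<bar>v\<bar>))"
proof -
  note e = assms(1) and q = assms(2,3)
  define K where "K = (if \<tau> > 0 then 0 else nat (floor (- \<tau>)) + 1)"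
  have tK: "\<tau> + real K > 0"
  proof (cases "\<tau> > 0")
    case False
    have "real (nat (floor (- \<tau>))) \<ge> of_int (floor (- \<tau>))" by simp
    moreover have "of_int (floor (- \<tau>)) > - \<tau> - 1" by linarith
    moreover have "real K = real (nat (floor (- \<tau>))) + 1" using False by (simp add: K_def)
    ultimately show ?thesis by linarith
  qed (simp add: K_def)
  define D where "D = Dq q \<epsilon> \<sigma> \<tau> K"
  have D0: "0 \<le> D" unfolding D_def by (rule Dq_nonneg[OF q tK e])
  define a where "a = \<bar>\<sigma>\<bar> + real K + 1"
  have a0: "a \<ge> 1" unfolding a_def by simp
  have main: "cmod (zeta_q q (Complex \<sigma> v) t) \<le> D * (a + \<bar>v\<bar>) ^ K"
    if t: "Re t = \<tau>" and inf: "(INF r\<in>(UNIV::nat set). cmod (1 - qpow q (t + of_nat r))) > \<epsilon>" for v t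
  proof -
    define s where "s = Complex \<sigma> v"
    have sep: "cmod (1 - qpow q (t + of_nat k)) > \<epsilon>" for k
    proof -
      have "(INF r\<in>(UNIV::nat set). cmod (1 - qpow q (t + of_nat r))) \<le> cmod (1 - qpow q (t + of_nat k))"
        by (rule cINF_lower) (auto intro: bdd_belowI[of _ 0])
      then show ?thesis using inf by linarith
    qed
    have tp: "t \<notin> qpoles q"
    proof
      assume "t \<in> qpoles q"
      then obtain k where "qpow q (t + of_nat k) = 1" using pole_imp_qpow1[OF q] by blast
      then show False using sep[of k] e by simp
    qed
    have tK': "Re t + real K > 0" using tK t by simp
    have "zeta_q q s t = Fq q s t" by (rule zeta_eq[OF q tp])
    also have "\<dots> = Gq q s K t" unfolding Fq_def by (rule G_eq[OF q Kof_pos tK'])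
    finally have z: "zeta_q q s t = Gq q s K t" .
    have "cmod (Gq q s K t) \<le> Dq q \<epsilon> (Re s) (Re t) K * (cmod s + K + 1) ^ K"
      by (rule G_poly[OF q tK' e sep])
    also have "\<dots> \<le> D * (a + \<bar>v\<bar>) ^ K"
    proof -
      have "cmod s \<le> \<bar>\<sigma>\<bar> + \<bar>v\<bar>" unfolding s_def using cmod_le[of "Complex \<sigma> v"] by simp
      then have "(cmod s + K + 1) ^ K \<le> (a + \<bar>v\<bar>) ^ K" unfolding a_def
        by (intro power_mono) auto
      then show ?thesis unfolding D_def s_def using t D0 D_def
        by (simp add: mult_left_mono)
    qed
    finally show ?thesis using z s_def by simp
  qed
  show ?thesis
  proof (cases "\<tau> > 0")
    case True
    then have K0: "K = 0" by (simp add: K_def)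
    have "\<forall>v t. 1 \<le> \<bar>v\<bar> \<longrightarrow> Re t = \<tau> \<longrightarrow>
           (INF r\<in>(UNIV::nat set). cmod (1 - qpow q (t + of_nat r))) > \<epsilon> \<longrightarrow>
           cmod (zeta_q q (Complex \<sigma> v) t) \<le> D + 1"
    proof (intro allI impI)
      fix v :: real and t
      assume t: "Re t = \<tau>" and
        inf: "(INF r\<in>(UNIV::nat set). cmod (1 - qpow q (t + of_nat r))) > \<epsilon>"
      have "cmod (zeta_q q (Complex \<sigma> v) t) \<le> D * (a + \<bar>v\<bar>) ^ K" by (rule main[OF t inf])
      then show "cmod (zeta_q q (Complex \<sigma> v) t) \<le> D + 1" using K0 by simp
    qed
    moreover have "D + 1 > 0" using D0 by simp
    ultimately show ?thesis using True
      by (intro exI[of _ "D + 1"]) (auto intro!: exI[of _ 1])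
  next
    case False
    show ?thesis
    proof (cases "\<tau> = 0")
      case True
      then have K1: "K = 1" by (simp add: K_def)
      have "\<forall>v t. 1 \<le> \<bar>v\<bar> \<longrightarrow> Re t = \<tau> \<longrightarrow>
           (INF r\<in>(UNIV::nat set). cmod (1 - qpow q (t + of_nat r))) > \<epsilon> \<longrightarrow>
           cmod (zeta_q q (Complex \<sigma> v) t) \<le> (D * (a + 1) + 1) * \<bar>v\<bar>"
      proof (intro allI impI)
        fix v :: real and t
        assume v: "1 \<le> \<bar>v\<bar>" and t: "Re t = \<tau>" and
          inf: "(INF r\<in>(UNIV::nat set). cmod (1 - qpow q (t + of_nat r))) > \<epsilon>"
        have "cmod (zeta_q q (Complex \<sigma> v) t) \<le> D * (a + \<bar>v\<bar>)" using main[OF t inf] K1 by simp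
        also have "\<dots> \<le> D * ((a + 1) * \<bar>v\<bar>)"
          using v a0 D0 by (intro mult_left_mono) (auto simp: algebra_simps intro: order.trans[OF _ mult_left_mono[of 1 "\<bar>v\<bar>" a]])
        also have "\<dots> \<le> (D * (a + 1) + 1) * \<bar>v\<bar>" using v by (simp add: algebra_simps)
        finally show "cmod (zeta_q q (Complex \<sigma> v) t) \<le> (D * (a + 1) + 1) * \<bar>v\<bar>" .
      qed
      moreover have "D * (a + 1) + 1 > 0" using D0 a0 by (simp add: add_nonneg_pos)
      ultimately show ?thesis using True
        by (intro exI[of _ "D * (a + 1) + 1"]) (auto intro!: exI[of _ 1])
    next
      case False2: False
      then have neg: "\<tau> < 0" using False by simp
      then have Kp: "K > 0" by (simp add: K_def)
      define b where "b = - \<tau> * (1 + pi / 2)"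
      have b0: "b > 0" 
      proof -
        have "0 < 1 + pi / 2" using pi_gt_zero by linarith
        from mult_neg_pos[OF neg this] show ?thesis unfolding b_def by simp
      qed
      define C where "C = D * ((real K / b) ^ K * exp (b * a)) + 1"
      have C0: "C > 0" unfolding C_def using D0 b0 by (simp add: add_nonneg_pos)
      have "\<forall>v t. 1 \<le> \<bar>v\<bar> \<longrightarrow> Re t = \<tau> \<longrightarrow>
           (INF r\<in>(UNIV::nat set). cmod (1 - qpow q (t + of_nat r))) > \<epsilon> \<longrightarrow>
           cmod (zeta_q q (Complex \<sigma> v) t) \<le> C * exp (- \<tau> * (1 + pi / 2) * \<bar>v\<bar>)"
      proof (intro allI impI)
        fix v :: real and t
        assume v: "1 \<le> \<bar>v\<bar>" and t: "Re t = \<tau>" and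
          inf: "(INF r\<in>(UNIV::nat set). cmod (1 - qpow q (t + of_nat r))) > \<epsilon>"
        have "cmod (zeta_q q (Complex \<sigma> v) t) \<le> D * (a + \<bar>v\<bar>) ^ K" by (rule main[OF t inf])
        also have "\<dots> \<le> D * ((real K / b) ^ K * exp (b * (a + \<bar>v\<bar>)))"
          using exp_poly_bound[OF b0 _ Kp, of "a + \<bar>v\<bar>"] a0 D0 by (intro mult_left_mono) auto
        also have "\<dots> = D * ((real K / b) ^ K * exp (b * a)) * exp (b * \<bar>v\<bar>)"
          by (simp add: distrib_left exp_add)
        also have "\<dots> \<le> C * exp (b * \<bar>v\<bar>)" unfolding C_def by (simp add: algebra_simps)
        finally show "cmod (zeta_q q (Complex \<sigma> v) t) \<le> C * exp (- \<tau> * (1 + pi / 2) * \<bar>v\<bar>)"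
          by (simp add: b_def)
      qed
      then show ?thesis using C0 neg
        by (intro exI[of _ C]) (auto intro!: exI[of _ 1])
    qed
  qed
qed

end
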